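(* Let $\alpha\neq 0$, $\beta,\gamma$ be real numbers and $\lambda$ a nonnegative integer. For all nonnegative integers $n$, $$\mathcal{E}_{n}^{(\lambda)}(\alpha,\beta,\gamma)=(-1)^{n}A_{n}^{\lambda,-1/2}(\alpha,-\beta,-\gamma)=A_{n}^{\lambda,-1/2}(-\alpha,\beta,\gamma).$$
   Context: For a number $t$ and $\alpha$, the generalised factorial is $(t|\alpha)_n=\prod_{j=0}^{n-1}(t-j\alpha)$ for $n\ge 1$ and $(t|\alpha)_0=1$. For parameters $\alpha,\beta,\gamma$, the generalised Stirling numbers $S(n,k,\alpha,\beta,\gamma)$ ($0\le k\le n$) are defined by the polynomial identity $(t|\alpha)_n=\sum_{k=0}^{n}S(n,k,\alpha,\beta,\gamma)\,(t-\gamma|\beta)_k$ in the variable $t$. For a nonnegative integer $\lambda$ put $\binom{k+\lambda-1}{k}=\lambda(\lambda+1)\cdots(\lambda+k-1)/k!$ (equal to $1$ for $k=0$). Define $$A^{\lambda,x}_n(\alpha,\beta,\gamma)=\sum_{k=0}^{n}\binom{k+\lambda-1}{k}(-1)^{n+k}\beta^k k!\,S(n,k,\alpha,-\beta,-\gamma)\,x^k .$$ The higher order generalised Euler polynomials $\mathcal{E}_n^{(\lambda)}(\alpha,\beta,x)$ are defined by the formal power series identity $$\left[\frac{2}{(1+\alpha t)^{\beta/\alpha}+1}\right]^{\lambda}(1+\alpha t)^{x/\alpha}=\sum_{n=0}^{\infty}\mathcal{E}_{n}^{(\lambda)}(\alpha,\beta,x)\frac{t^{n}}{n!},$$ where $(1+\alpha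 t)^{c}=\sum_{j\ge0}\binom{c}{j}\alpha^jt^j$. *)

theory Defs
  imports "HOL-Computational_Algebra.Formal_Power_Series"
begin

definition gfact :: "real \<Rightarrow> real \<Rightarrow> nat \<Rightarrow> real" where
  "gfact t a n = (\<Prod>j<n. t - real j * a)"

text \<open>Generalised Stirling numbers S(n,k,a,b,c), defined by the polynomial identity
  (t|a)_n = sum_{k=0}^n S(n,k,a,b,c) (t-c|b)_k for all t; values for k > n are set to 0
  to make the description unique.\<close>
definition gstirling :: "nat \<Rightarrow> nat \<Rightarrow> real \<Rightarrow> real \<Rightarrow> real \<Rightarrow> real" where
  "gstirling n k a b c =
     (THE s :: nat \<Rightarrow> real. (\<forall>t. gfact t a n = (\<Sum>i\<le>n. s i * gfact (t - c) b i))
                          \<and> (\<forall>i>n. s i = 0)) k"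

definition Apoly :: "nat \<Rightarrow> nat \<Rightarrow> real \<Rightarrow> real \<Rightarrow> real \<Rightarrow> real \<Rightarrow> real" where
  "Apoly n lam x a b c =
     (\<Sum>k\<le>n. (pochhammer (real lam) k / fact k) * (-1) ^ (n + k) * b ^ k * fact k
              * gstirling n k a (- b) (- c) * x ^ k)"

definition binom_fps :: "real \<Rightarrow> real \<Rightarrow> real fps" where
  "binom_fps a e = Abs_fps (\<lambda>j. (e gchoose j) * a ^ j)"

definition geuler :: "nat \<Rightarrow> nat \<Rightarrow> real \<Rightarrow> real \<Rightarrow> real \<Rightarrow> real" where
  "geuler n lam a b x =
     fact n * fps_nth ((fps_const 2 * inverse (binom_fps a (b / a) + 1)) ^ lam
                        * binom_fps a (x / a)) n"

end

theory Submission
  imports Defs "HOL-Computational_Algebra.Polynomial"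
begin

unbundle fps_syntax

fun stir :: "real \<Rightarrow> real \<Rightarrow> real \<Rightarrow> nat \<Rightarrow> nat \<Rightarrow> real" where
  "stir a b c 0 k = (if k = 0 then 1 else 0)"
| "stir a b c (Suc n) k = (if k = 0 then 0 else stir a b c n (k - 1))
      + (c + real k * b - real n * a) * stir a b c n k"

lemma stir_zero: "k > n \<Longrightarrow> stir a b c n k = 0"
  by (induction n arbitrary: k) auto

lemma gfact_Suc: "gfact t a (Suc n) = gfact t a n * (t - real n * a)"
  by (simp add: gfact_def)

lemma stir_identity:
  "gfact t a n = (\<Sum>k\<le>n. stir a b c n k * gfact (t - c) b k)"
proof (induction n)
  case 0
  then show ?case by (simp add: gfact_def)
next
  case (Suc n)
  define G where "G k = gfact (t - c) b k" for k
  have key: "G k * (t - real n * a) = G (Suc k) + (c + real k * b - real n * a) * G k" for k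
    by (simp add: G_def gfact_Suc algebra_simps)
  have "gfact t a (Suc n) = (\<Sum>k\<le>n. stir a b c n k * G k) * (t - real n * a)"
    using Suc by (simp add: gfact_Suc G_def)
  also have "\<dots> = (\<Sum>k\<le>n. stir a b c n k * (G k * (t - real n * a)))"
    by (simp add: sum_distrib_right mult.assoc)
  also have "\<dots> = (\<Sum>k\<le>n. stir a b c n k * G (Suc k)
      + (c + real k * b - real n * a) * stir a b c n k * G k)"
    by (intro sum.cong refl) (subst key, simp add: algebra_simps)
  also have "\<dots> = (\<Sum>k\<le>n. stir a b c n k * G (Suc k))
      + (\<Sum>k\<le>n. (c + real k * b - real n * a) * stir a b c n k * G k)"
    by (simp add: sum.distrib)
  also have "(\<Sum>k\<le>n. stir a b c n k * G (Suc k))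
      = (\<Sum>k\<le>Suc n. (if k = 0 then 0 else stir a b c n (k - 1)) * G k)"
    by (subst sum.atMost_Suc_shift) simp
  also have "(\<Sum>k\<le>n. (c + real k * b - real n * a) * stir a b c n k * G k)
      = (\<Sum>k\<le>Suc n. (c + real k * b - real n * a) * stir a b c n k * G k)"
    by (simp add: stir_zero)
  finally show ?case
    by (simp add: G_def[symmetric] sum.distrib[symmetric] algebra_simps)
qed

definition gp :: "real \<Rightarrow> real \<Rightarrow> nat \<Rightarrow> real poly" where
  "gp c b k = (\<Prod>j<k. [:-(c + real j * b), 1:])"

lemma poly_gp: "poly (gp c b k) t = gfact (t - c) b k"
  by (simp add: gp_def gfact_def poly_prod algebra_simps)

lemma gp_deg: "degree (gp c b k) = k \<and> coeff (gp c b k) k = 1"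
proof (induction k)
  case 0
  then show ?case by (simp add: gp_def)
next
  case (Suc k)
  have e: "gp c b (Suc k) = gp c b k * [:-(c + real k * b), 1:]"
    by (simp add: gp_def)
  have nz: "gp c b k \<noteq> 0" using Suc by auto
  have d: "degree (gp c b (Suc k)) = Suc k"
    unfolding e using Suc nz by (subst degree_mult_eq) auto
  have "coeff (gp c b (Suc k)) (Suc k) = 1"
    using coeff_mult_degree_sum[of "gp c b k" "[:-(c + real k * b), 1:]"] Suc
    unfolding e by simp
  with d show ?case by simp
qed

lemma uniq_aux:
  "(\<forall>t. (\<Sum>i\<le>N. r i * gfact (t - c) b i) = 0) \<Longrightarrow> \<forall>i\<le>N. r i = 0"
proof (induction N)
  case 0
  then show ?case by (simp add: gfact_def)
next
  case (Suc N)
  define R where "R = (\<Sum>i\<le>Suc N. smult (r i) (gp c b i))"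
  have "\<forall>t. poly R t = 0" using Suc.prems by (simp add: R_def poly_sum poly_gp)
  then have "R = 0" using poly_all_0_iff_0 by blast
  then have "coeff R (Suc N) = 0" by simp
  moreover have "coeff R (Suc N) = r (Suc N)"
  proof -
    have "coeff R (Suc N) = (\<Sum>i\<le>Suc N. r i * coeff (gp c b i) (Suc N))"
      by (simp add: R_def coeff_sum)
    also have "\<dots> = r (Suc N)"
    proof -
      have "coeff (gp c b i) (Suc N) = 0" if "i \<le> N" for i
        using gp_deg[of c b i] that by (intro coeff_eq_0) auto
      then show ?thesis using gp_deg[of c b "Suc N"] by simp
    qed
    finally show ?thesis .
  qed
  ultimately have rN: "r (Suc N) = 0" by simp
  then have "\<forall>i\<le>N. r i = 0" using Suc by simp
  with rN show ?case using le_Suc_eq by auto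
qed

lemma gstirling_eq: "gstirling n k a b c = stir a b c n k"
proof -
  let ?P = "\<lambda>s :: nat \<Rightarrow> real. (\<forall>t. gfact t a n = (\<Sum>i\<le>n. s i * gfact (t - c) b i))
                          \<and> (\<forall>i>n. s i = 0)"
  have ex: "?P (stir a b c n)" using stir_identity stir_zero by blast
  have un: "s = stir a b c n" if "?P s" for s
  proof
    fix i
    have "\<forall>t. (\<Sum>j\<le>n. (s j - stir a b c n j) * gfact (t - c) b j) = 0"
      using that ex by (simp add: algebra_simps sum_subtractf)
    from uniq_aux[OF this] have "\<forall>j\<le>n. s j = stir a b c n j" by simp
    then show "s i = stir a b c n i" using that stir_zero[of n i] by (cases "i \<le> n") auto
  qed
  have "(THE s. ?P s) = stir a b c n"
    using ex un by (intro the_equality) auto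
  then show ?thesis by (simp add: gstirling_def)
qed

lemma stir_neg: "stir (-a) (-b) (-c) n k = (-1) ^ (n + k) * stir a b c n k"
proof (induction n arbitrary: k)
  case 0
  then show ?case by simp
next
  case (Suc n)
  show ?case
  proof (cases k)
    case 0
    then show ?thesis using Suc by (simp add: algebra_simps)
  next
    case (Suc j)
    then show ?thesis using Suc.IH by (simp add: algebra_simps)
  qed
qed


lemma binom_fps_compose: "binom_fps a e = fps_binomial e oo (fps_const a * fps_X)"
  by (subst fps_compose_linear) (simp add: binom_fps_def fps_binomial_def mult_ac)

lemma binom_fps_mult: "binom_fps a e1 * binom_fps a e2 = binom_fps a (e1 + e2)"
  by (simp add: binom_fps_compose fps_binomial_add_mult fps_compose_mult_distrib)

lemma binom_fps_power: "binom_fps a e ^ m = binom_fps a (of_nat m * e)"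
  by (simp add: binom_fps_compose fps_compose_power fps_binomial_power)

lemma binom_fps_0th: "binom_fps a e $ 0 = 1"
  by (simp add: binom_fps_def)

lemma binom_fps_nth:
  assumes "a \<noteq> 0"
  shows "binom_fps a (c / a) $ n = gfact c a n / fact n"
proof -
  have "(\<Prod>i=0..<n. c / a - of_nat i) * a ^ n = (\<Prod>i=0..<n. (c / a - of_nat i) * a)"
    by (simp add: prod.distrib)
  also have "\<dots> = gfact c a n"
    unfolding gfact_def atLeast0LessThan using assms by (intro prod.cong refl) (simp add: field_simps)
  finally have e: "(\<Prod>i=0..<n. c / a - of_nat i) * a ^ n = gfact c a n" .
  have "binom_fps a (c / a) $ n = (\<Prod>i=0..<n. c / a - of_nat i) * a ^ n / fact n"
    by (simp add: binom_fps_def gbinomial_prod_rev)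
  then show ?thesis using e by simp
qed

lemma power_nth_low:
  fixes U :: "real fps"
  assumes "U $ 0 = 0" "j < k"
  shows "(U ^ k) $ j = 0"
proof -
  have "U = fps_X * fps_shift 1 U"
    using assms(1) by (intro fps_ext) (simp add: fps_X_mult_nth)
  then have "U ^ k = fps_X ^ k * fps_shift 1 U ^ k"
    by (metis power_mult_distrib)
  then show ?thesis using assms(2) by (simp add: fps_X_power_mult_nth)
qed


lemma binsum:
  fixes \<alpha> \<beta> \<gamma> :: real
  assumes "\<alpha> \<noteq> 0"
  shows "(\<Sum>k\<le>m. real (m choose k) * ((binom_fps \<alpha> (\<beta>/\<alpha>) - 1) ^ k * binom_fps \<alpha> (\<gamma>/\<alpha>)) $ n)
         = gfact (\<gamma> + real m * \<beta>) \<alpha> n / fact n"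
proof -
  define U where "U = binom_fps \<alpha> (\<beta>/\<alpha>) - 1"
  define G where "G = binom_fps \<alpha> (\<gamma>/\<alpha>)"
  have "(U + 1) ^ m = (\<Sum>k\<le>m. of_nat (m choose k) * U ^ k * 1 ^ (m - k))"
    by (rule binomial_ring)
  then have e1: "binom_fps \<alpha> (\<beta>/\<alpha>) ^ m = (\<Sum>k\<le>m. fps_const (real (m choose k)) * U ^ k)"
    by (simp add: U_def fps_of_nat)
  have e2: "binom_fps \<alpha> (\<beta>/\<alpha>) ^ m * G = binom_fps \<alpha> ((\<gamma> + real m * \<beta>) / \<alpha>)"
    by (simp add: G_def binom_fps_power binom_fps_mult add_divide_distrib add_ac)
  have "(\<Sum>k\<le>m. real (m choose k) * (U ^ k * G) $ n)
      = ((\<Sum>k\<le>m. fps_const (real (m choose k)) * U ^ k) * G) $ n"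
    by (simp add: sum_distrib_right fps_sum_nth mult.assoc)
  also have "\<dots> = gfact (\<gamma> + real m * \<beta>) \<alpha> n / fact n"
    using e1 e2 binom_fps_nth[OF assms] by simp
  finally show ?thesis by (simp add: U_def G_def)
qed

lemma high_zero:
  fixes U G :: "real fps"
  assumes "U $ 0 = 0" "n < k"
  shows "(U ^ k * G) $ n = 0"
  using assms by (simp add: fps_mult_nth power_nth_low)

lemma prod_choose: "(\<Prod>j<k. real m - real j) = fact k * real (m choose k)"
  by (simp add: binomial_gbinomial gbinomial_prod_rev atLeast0LessThan)

lemma stir_val:
  fixes \<alpha> \<beta> \<gamma> :: real
  assumes "\<alpha> \<noteq> 0" "k \<le> n"
  shows "\<beta> ^ k * fact k * stir \<alpha> \<beta> \<gamma> n k
       = fact n * ((binom_fps \<alpha> (\<beta>/\<alpha>) - 1) ^ k * binom_fps \<alpha> (\<gamma>/\<alpha>)) $ n"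
proof -
  define U where "U = binom_fps \<alpha> (\<beta>/\<alpha>) - 1"
  define G where "G = binom_fps \<alpha> (\<gamma>/\<alpha>)"
  define d where "d k = fact n * (U ^ k * G) $ n" for k
  define e where "e k = \<beta> ^ k * fact k * stir \<alpha> \<beta> \<gamma> n k - d k" for k
  have U0: "U $ 0 = 0" by (simp add: U_def binom_fps_0th)
  have dz: "d k = 0" if "n < k" for k
    using high_zero[OF U0 that] by (simp add: d_def)
  have gf: "gfact (real m * \<beta>) \<beta> k = \<beta> ^ k * (fact k * real (m choose k))" for m k
  proof -
    have "gfact (real m * \<beta>) \<beta> k = (\<Prod>j<k. \<beta> * (real m - real j))"
      by (simp add: gfact_def algebra_simps)
    also have "\<dots> = \<beta> ^ k * (\<Prod>j<k. real m - real j)"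
      by (simp add: prod.distrib)
    finally show ?thesis by (simp add: prod_choose)
  qed
  have gf2: "gfact (\<beta> * real m) \<beta> k = \<beta> ^ k * (fact k * real (m choose k))" for m k
    using gf[of m k] by (simp add: mult.commute)
  have sumz: "(\<Sum>k\<le>n. real (m choose k) * e k) = 0" for m
  proof -
    have A: "gfact (\<gamma> + real m * \<beta>) \<alpha> n = (\<Sum>k\<le>n. real (m choose k) * (\<beta> ^ k * fact k * stir \<alpha> \<beta> \<gamma> n k))"
      using stir_identity[of "\<gamma> + real m * \<beta>" \<alpha> n \<beta> \<gamma>]
      by (simp add: gf2 mult_ac)
    have "(\<Sum>k\<le>m. real (m choose k) * d k) = gfact (\<gamma> + real m * \<beta>) \<alpha> n"
      using binsum[OF assms(1), of m \<beta> \<gamma> n]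
      by (simp add: d_def U_def G_def sum_distrib_left[symmetric] mult_ac)
    moreover have "(\<Sum>k\<le>m. real (m choose k) * d k) = (\<Sum>k\<le>m+n. real (m choose k) * d k)"
      by (rule sum.mono_neutral_left) auto
    moreover have "(\<Sum>k\<le>n. real (m choose k) * d k) = (\<Sum>k\<le>m+n. real (m choose k) * d k)"
      by (rule sum.mono_neutral_left) (auto simp: dz)
    ultimately have B: "(\<Sum>k\<le>n. real (m choose k) * d k) = gfact (\<gamma> + real m * \<beta>) \<alpha> n"
      by simp
    show ?thesis using A B by (simp add: e_def right_diff_distrib sum_subtractf)
  qed
  have "\<forall>j. j \<le> n \<longrightarrow> e j = 0"
  proof (intro allI)
    fix j show "j \<le> n \<longrightarrow> e j = 0"
    proof (induction j rule: less_induct)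
      case (less j)
      show ?case
      proof
        assume jn: "j \<le> n"
        have "(\<Sum>k\<le>n. real (j choose k) * e k) = (\<Sum>k\<in>{j}. real (j choose k) * e k)"
        proof (rule sum.mono_neutral_right)
          show "\<forall>i\<in>{..n} - {j}. real (j choose i) * e i = 0"
          proof
            fix i assume i: "i \<in> {..n} - {j}"
            show "real (j choose i) * e i = 0"
            proof (cases "i < j")
              case True
              then show ?thesis using less.IH[of i] i by auto
            next
              case False
              then show ?thesis using i by auto
            qed
          qed
        qed (use jn in auto)
        then show "e j = 0" using sumz[of j] by simp
      qed
    qed
  qed
  then show ?thesis using assms(2) by (simp add: e_def d_def U_def G_def)
qed


lemma geuler_sum:
  fixes \<alpha> \<beta> \<gamma> :: real
  assumes "\<alpha> \<noteq> 0"
  shows "geuler n lam \<alpha> \<beta> \<gamma> = (\<Sum>k\<le>n. (- real lam gchoose k) * (1/2) ^ k *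
           (fact n * ((binom_fps \<alpha> (\<beta>/\<alpha>) - 1) ^ k * binom_fps \<alpha> (\<gamma>/\<alpha>)) $ n))"
proof -
  define P where "P = binom_fps \<alpha> (\<beta>/\<alpha>)"
  define U where "U = P - 1"
  define G where "G = binom_fps \<alpha> (\<gamma>/\<alpha>)"
  define V where "V = fps_const (1/2) * U"
  define b where "b k = (- real lam gchoose k)" for k
  define Q where "Q = fps_binomial (- real lam) oo V"
  have U0: "U $ 0 = 0" by (simp add: U_def P_def binom_fps_0th)
  have V0: "V $ 0 = 0" by (simp add: V_def U0)
  have h0: "1 + V = fps_const (1/2) * (P + 1)"
    by (rule fps_ext) (simp add: V_def U_def algebra_simps)
  have h1: "fps_const 2 * inverse (P + 1) = inverse (1 + V)"
    by (simp add: h0 fps_inverse_mult fps_const_inverse)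
  have X1: "((1 + fps_X :: real fps) ^ lam) $ 0 = 1"
    by (simp add: fps_nth_power_0)
  have h2: "Q = inverse (1 + V) ^ lam"
  proof -
    have "Q = inverse ((1 + fps_X) ^ lam) oo V"
      by (simp add: Q_def fps_binomial_minus_of_nat)
    also have "\<dots> = inverse ((1 + fps_X) ^ lam oo V)"
      using V0 X1 by (intro fps_inverse_compose) auto
    also have "(1 + fps_X) ^ lam oo V = ((1 + fps_X) oo V) ^ lam"
      using V0 by (simp add: fps_compose_power)
    also have "(1 + fps_X) oo V = 1 + V"
      using V0 by (simp add: fps_compose_add_distrib)
    finally show ?thesis by (simp add: fps_inverse_power)
  qed
  define W where "W = (\<Sum>k\<le>n. fps_const (b k) * V ^ k)"
  have QW: "Q $ i = W $ i" if "i \<le> n" for i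
  proof -
    have "Q $ i = (\<Sum>k\<in>{0..i}. b k * (V ^ k) $ i)"
      by (simp add: Q_def fps_compose_nth b_def)
    also have "\<dots> = (\<Sum>k\<le>n. b k * (V ^ k) $ i)"
      using that by (intro sum.mono_neutral_left) (auto simp: power_nth_low[OF V0])
    also have "\<dots> = W $ i"
      by (simp add: W_def fps_sum_nth)
    finally show ?thesis .
  qed
  have "(Q * G) $ n = (W * G) $ n"
    by (simp add: fps_mult_nth QW)
  also have "\<dots> = (\<Sum>k\<le>n. b k * (V ^ k * G) $ n)"
    by (simp add: W_def sum_distrib_right fps_sum_nth mult.assoc)
  also have "\<dots> = (\<Sum>k\<le>n. b k * (1/2) ^ k * (U ^ k * G) $ n)"
    by (simp add: V_def power_mult_distrib mult.assoc)
  finally have QG: "(Q * G) $ n = (\<Sum>k\<le>n. b k * (1/2) ^ k * (U ^ k * G) $ n)" .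
  have "geuler n lam \<alpha> \<beta> \<gamma> = fact n * (Q * G) $ n"
    by (simp add: geuler_def h2 h1[symmetric] P_def G_def)
  also have "\<dots> = (\<Sum>k\<le>n. b k * (1/2) ^ k * (fact n * (U ^ k * G) $ n))"
    unfolding QG sum_distrib_left by (simp add: mult_ac)
  finally show ?thesis by (simp add: b_def U_def P_def G_def)
qed

lemma sgn_c: "(-1 :: real) ^ n * (-1) ^ (n + k) * (-1) ^ k * (-1) ^ k = (-1) ^ k"
proof -
  have "(-1 :: real) ^ n * (-1) ^ (n + k) * (-1) ^ k * (-1) ^ k = (-1) ^ (k + 2 * (n + k))"
  proof -
    have e: "n + (n + k) + k + k = k + 2 * (n + k)" by simp
    show ?thesis by (simp only: power_add[symmetric] e)
  qed
  also have "\<dots> = (-1) ^ k" by (simp add: power_add power_mult)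
  finally show ?thesis .
qed
lemma term1:
  fixes p f S \<beta> :: real
  shows "(-1) ^ n * (p / f * (-1) ^ (n + k) * (-\<beta>) ^ k * f * S * (-1/2) ^ k)
       = ((-1) ^ k * p / f) * (1/2) ^ k * (\<beta> ^ k * f * S)"
proof -
  have a: "(-\<beta>) ^ k = (-1) ^ k * \<beta> ^ k" by (rule power_minus)
  have b: "(-1/2 :: real) ^ k = (-1) ^ k * (1/2) ^ k" by (simp add: power_minus[symmetric])
  have "(-1) ^ n * (p / f * (-1) ^ (n + k) * (-\<beta>) ^ k * f * S * (-1/2) ^ k)
      = ((-1 :: real) ^ n * (-1) ^ (n + k) * (-1) ^ k * (-1) ^ k) * (p / f * \<beta> ^ k * f * S * (1/2) ^ k)"
    unfolding a b by (simp only: mult_ac)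
  also have "\<dots> = ((-1) ^ k * p / f) * (1/2) ^ k * (\<beta> ^ k * f * S)"
    unfolding sgn_c by (simp only: mult_ac times_divide_eq_right times_divide_eq_left)
  finally show ?thesis .
qed
lemma term2:
  fixes p f S \<beta> :: real
  shows "(-1) ^ n * (p / f * (-1) ^ (n + k) * (-\<beta>) ^ k * f * S * (-1/2) ^ k)
       = p / f * (-1) ^ (n + k) * \<beta> ^ k * f * ((-1) ^ (n + k) * S) * (-1/2) ^ k"
proof -
  have b: "(-1/2 :: real) ^ k = (-1) ^ k * (1/2) ^ k" by (simp add: power_minus[symmetric])
  have s: "((-1::real) ^ (n + k)) * (-1) ^ (n + k) = 1"
    by (simp flip: power_add)
  have "p / f * (-1) ^ (n + k) * \<beta> ^ k * f * ((-1) ^ (n + k) * S) * (-1/2) ^ k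
      = (p / f * \<beta> ^ k * f * S * ((-1) ^ k * (1/2) ^ k)) * (((-1::real) ^ (n + k)) * (-1) ^ (n + k))"
    unfolding b by (simp only: mult_ac)
  also have "\<dots> = ((-1) ^ k * p / f) * (1/2) ^ k * (\<beta> ^ k * f * S)"
    unfolding s by (simp only: mult_ac mult_1_right times_divide_eq_right times_divide_eq_left)
  finally show ?thesis unfolding term1 by simp
qed

theorem mainTheorem10:
  fixes \<alpha> \<beta> \<gamma> :: real and lam n :: nat
  assumes "\<alpha> \<noteq> 0"
  shows "geuler n lam \<alpha> \<beta> \<gamma> = (-1) ^ n * Apoly n lam (-1/2) \<alpha> (-\<beta>) (-\<gamma>)
       \<and> (-1) ^ n * Apoly n lam (-1/2) \<alpha> (-\<beta>) (-\<gamma>) = Apoly n lam (-1/2) (-\<alpha>) \<beta> \<gamma>"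
proof
  have "(-1) ^ n * Apoly n lam (-1/2) \<alpha> (-\<beta>) (-\<gamma>)
     = (\<Sum>k\<le>n. ((-1) ^ k * pochhammer (real lam) k / fact k) * (1/2) ^ k * (\<beta> ^ k * fact k * stir \<alpha> \<beta> \<gamma> n k))"
    unfolding Apoly_def gstirling_eq sum_distrib_left
    by (intro sum.cong refl) (simp only: minus_minus term1)
  also have "\<dots> = geuler n lam \<alpha> \<beta> \<gamma>"
    unfolding geuler_sum[OF assms]
    by (intro sum.cong refl) (simp add: stir_val[OF assms] gbinomial_pochhammer)
  finally show "geuler n lam \<alpha> \<beta> \<gamma> = (-1) ^ n * Apoly n lam (-1/2) \<alpha> (-\<beta>) (-\<gamma>)" by simp
next
  show "(-1) ^ n * Apoly n lam (-1/2) \<alpha> (-\<beta>) (-\<gamma>) = Apoly n lam (-1/2) (-\<alpha>) \<beta> \<gamma>"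
    unfolding Apoly_def gstirling_eq sum_distrib_left stir_neg
    by (intro sum.cong refl) (simp only: minus_minus term2)
qed

end
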